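(* For integers $q\ge1$, $a$, $n$ define $S(q,a,n)=\sum_{x=1}^q e\big(\frac{ax^2+nx}{q}\big)$, and for integers $n_1,n_2,n_3,m$ define $$T(q;n_1,n_2,n_3,m)=\sum_{\substack{a=1\\ (a,q)=1}}^q S(q,a,n_1)S(q,a,n_2)S(q,a,n_3)\,e\Big(\frac{\overline{a}\,m}{q}\Big),$$ where $\overline{a}$ denotes the inverse of $a$ modulo $q$. If $q_1,q_2$ are positive integers with $(q_1,q_2)=1$, then for all integers $n_1,n_2,n_3,m$, $$T(q_1q_2;n_1,n_2,n_3,m)=T(q_1;n_1,n_2,n_3,m)\,T(q_2;n_1,n_2,n_3,m).$$
   Context: $e(z)=e^{2\pi i z}$. *)

theory Defs
  imports "HOL-Analysis.Analysis" "HOL-Number_Theory.Number_Theory"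
begin

definition e :: "real \<Rightarrow> complex" where
  "e z = exp (2 * of_real pi * \<i> * of_real z)"

definition S :: "int \<Rightarrow> int \<Rightarrow> int \<Rightarrow> complex" where
  "S q a n = (\<Sum>x\<in>{1..q}. e (of_int (a * x^2 + n * x) / of_int q))"

definition T :: "int \<Rightarrow> int \<Rightarrow> int \<Rightarrow> int \<Rightarrow> int \<Rightarrow> complex" where
  "T q n1 n2 n3 m = (\<Sum>a\<in>{a\<in>{1..q}. coprime a q}.
      S q a n1 * S q a n2 * S q a n3 * e (of_int (modular_inverse q a * m) / of_int q))"

end

theory Submission
  imports Defs
begin

lemma e_add: "e (x + y) = e x * e y"
  unfolding e_def by (simp add: distrib_left exp_add)

lemma e_int: "e (of_int k) = 1"
proof -
  have "e (of_int k) = exp ((2 * of_real (of_int k) * pi) * \<i>)"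
    unfolding e_def by (simp add: ac_simps)
  also have "\<dots> = 1" by (rule exp_integer_2pi) simp
  finally show ?thesis .
qed

lemma E_cong:
  fixes q u v :: int
  assumes "q \<noteq> 0" "[u = v] (mod q)"
  shows "e (of_int u / of_int q) = e (of_int v / of_int q)"
proof -
  obtain k where k: "u - v = q * k" using assms(2) by (auto simp: cong_iff_dvd_diff dvd_def)
  have "of_int u / of_int q = of_int v / of_int q + (of_int k :: real)"
  proof -
    have "(of_int u :: real) = of_int v + of_int q * of_int k" using k
      by (metis add.commute diff_add_cancel of_int_add of_int_mult)
    thus ?thesis using assms(1) by (simp add: field_simps)
  qed
  thus ?thesis by (simp add: e_add e_int)
qed

lemma E_add:
  fixes q u v :: int
  shows "e (of_int (u + v) / of_int q) = e (of_int u / of_int q) * e (of_int v / of_int q)"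
  by (simp add: add_divide_distrib e_add)

lemma E_scale:
  fixes q c u :: int
  assumes "c \<noteq> 0"
  shows "e (of_int (c * u) / of_int (c * q)) = e (of_int u / of_int q)"
  using assms by simp

lemma E_mod:
  fixes q u :: int
  assumes "q \<noteq> 0"
  shows "e (of_int (u mod q) / of_int q) = e (of_int u / of_int q)"
  using E_cong[OF assms, of "u mod q" u] by (simp add: cong_def)

lemma sum_shift:
  fixes q :: int and f :: "int \<Rightarrow> complex"
  assumes "q \<ge> 1" "\<And>x. f (x mod q) = f x"
  shows "sum f {1..q} = sum f {0..<q}"
proof (rule sum.reindex_bij_witness[where i = "\<lambda>y. if y = 0 then q else y" and j = "\<lambda>x. x mod q"])
  fix a assume a: "a \<in> {1..q}"
  show "(if a mod q = 0 then q else a mod q) = a"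
    using a by (cases "a = q") (auto simp: mod_pos_pos_trivial)
  show "a mod q \<in> {0..<q}" using assms by auto
  show "f (a mod q) = f a" by (rule assms(2))
next
  fix b assume b: "b \<in> {0..<q}"
  show "(if b = 0 then q else b) mod q = b" using b by auto
  show "(if b = 0 then q else b) \<in> {1..q}" using b assms by auto
qed

lemma S_alt:
  fixes q a n :: int
  assumes "q \<ge> 1"
  shows "S q a n = (\<Sum>x\<in>{0..<q}. e (of_int (a * x^2 + n * x) / of_int q))"
  unfolding S_def
proof (rule sum_shift[OF assms])
  fix x
  have "[a * (x mod q)^2 + n * (x mod q) = a * x^2 + n * x] (mod q)"
    by (intro cong_add cong_mult cong_pow cong_refl) (simp_all add: cong_def)
  thus "e (of_int (a * (x mod q)^2 + n * (x mod q)) / of_int q) = e (of_int (a * x^2 + n * x) / of_int q)"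
    using assms by (intro E_cong) auto
qed

lemma S_mod:
  fixes q a n :: int
  assumes "q \<ge> 1"
  shows "S q (a mod q) n = S q a n"
  unfolding S_def
proof (rule sum.cong[OF refl])
  fix x
  have "[(a mod q) * x^2 + n * x = a * x^2 + n * x] (mod q)"
    by (intro cong_add cong_mult cong_refl) (simp_all add: cong_def)
  thus "e (of_int ((a mod q) * x^2 + n * x) / of_int q) = e (of_int (a * x^2 + n * x) / of_int q)"
    using assms by (intro E_cong) auto
qed

lemma inv_cong:
  fixes q b y :: int
  assumes "q > 0" "[b * y = 1] (mod q)"
  shows "[modular_inverse q b = y] (mod q)"
proof -
  have "[b * (y mod q) = b * y] (mod q)"
    by (intro cong_mult cong_refl) (simp add: cong_def)
  hence "[b * (y mod q) = 1] (mod q)" using assms(2) by (rule cong_trans)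
  hence "modular_inverse q b = y mod q"
    using assms(1) by (intro modular_inverse_int_eqI) auto
  thus ?thesis by (simp add: cong_def)
qed

lemma image_card_eq:
  assumes "finite B" "inj_on f A" "f ` A \<subseteq> B" "card A = card B"
  shows "f ` A = B"
  using assms by (metis card_image card_subset_eq)

lemma phi_inj:
  fixes q1 q2 :: int
  assumes "q1 \<ge> 1" "q2 \<ge> 1" "coprime q1 q2"
  shows "inj_on (\<lambda>(y1, y2). (q2 * y1 + q1 * y2) mod (q1 * q2)) ({0..<q1} \<times> {0..<q2})"
proof (rule inj_onI, clarify)
  fix y1 y2 z1 z2
  assume y: "y1 \<in> {0..<q1}" "y2 \<in> {0..<q2}" "z1 \<in> {0..<q1}" "z2 \<in> {0..<q2}"
    and eq: "(q2 * y1 + q1 * y2) mod (q1 * q2) = (q2 * z1 + q1 * z2) mod (q1 * q2)"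
  have c: "[q2 * y1 + q1 * y2 = q2 * z1 + q1 * z2] (mod q1 * q2)" using eq by (simp add: cong_def)
  have c1: "[q2 * y1 + q1 * y2 = q2 * z1 + q1 * z2] (mod q1)" using c by (rule cong_modulus_mult)
  have c2: "[q2 * y1 + q1 * y2 = q2 * z1 + q1 * z2] (mod q2)" using c
    by (metis cong_modulus_mult mult.commute)
  have "[q2 * y1 + q1 * y2 = q2 * y1] (mod q1)" by (simp add: cong_def)
  moreover have "[q2 * z1 + q1 * z2 = q2 * z1] (mod q1)" by (simp add: cong_def)
  ultimately have "[q2 * y1 = q2 * z1] (mod q1)" using c1
    by (meson cong_sym cong_trans)
  hence "[y1 = z1] (mod q1)" using assms(3) by (simp add: cong_mult_lcancel coprime_commute)
  hence 1: "y1 = z1" using y by (intro cong_less_imp_eq_int) auto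
  have "[q2 * y1 + q1 * y2 = q1 * y2] (mod q2)" by (simp add: cong_def)
  moreover have "[q2 * z1 + q1 * z2 = q1 * z2] (mod q2)" by (simp add: cong_def)
  ultimately have "[q1 * y2 = q1 * z2] (mod q2)" using c2
    by (meson cong_sym cong_trans)
  hence "[y2 = z2] (mod q2)" using assms(3) by (simp add: cong_mult_lcancel)
  hence 2: "y2 = z2" using y by (intro cong_less_imp_eq_int) auto
  show "y1 = z1 \<and> y2 = z2" using 1 2 by simp
qed

lemma phi_image:
  fixes q1 q2 :: int
  assumes "q1 \<ge> 1" "q2 \<ge> 1" "coprime q1 q2"
  shows "(\<lambda>(y1, y2). (q2 * y1 + q1 * y2) mod (q1 * q2)) ` ({0..<q1} \<times> {0..<q2}) = {0..<q1 * q2}"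
proof (rule image_card_eq[OF _ phi_inj[OF assms]])
  show "(\<lambda>(y1, y2). (q2 * y1 + q1 * y2) mod (q1 * q2)) ` ({0..<q1} \<times> {0..<q2}) \<subseteq> {0..<q1 * q2}"
    using assms by auto
  show "card ({0..<q1} \<times> {0..<q2}) = card {0..<q1 * q2}"
    using assms by (simp add: card_cartesian_product nat_mult_distrib)
qed simp

lemma psi_inj:
  fixes q1 q2 :: int
  assumes "q1 \<ge> 1" "q2 \<ge> 1" "coprime q1 q2"
  shows "inj_on (\<lambda>a. (a * q2 mod q1, a * q1 mod q2)) {0..<q1 * q2}"
proof (rule inj_onI)
  fix a b assume ab: "a \<in> {0..<q1 * q2}" "b \<in> {0..<q1 * q2}"
    and eq: "(a * q2 mod q1, a * q1 mod q2) = (b * q2 mod q1, b * q1 mod q2)"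
  have "[a * q2 = b * q2] (mod q1)" using eq by (simp add: cong_def)
  hence 1: "[a = b] (mod q1)" using assms(3) by (simp add: cong_mult_rcancel coprime_commute)
  have "[a * q1 = b * q1] (mod q2)" using eq by (simp add: cong_def)
  hence 2: "[a = b] (mod q2)" using assms(3) by (simp add: cong_mult_rcancel)
  have "[a = b] (mod q1 * q2)" using 1 2 assms(3) by (rule coprime_cong_mult)
  thus "a = b" using ab by (intro cong_less_imp_eq_int) auto
qed

lemma psi_image:
  fixes q1 q2 :: int
  assumes "q1 \<ge> 1" "q2 \<ge> 1" "coprime q1 q2"
  shows "(\<lambda>a. (a * q2 mod q1, a * q1 mod q2)) ` {0..<q1 * q2} = {0..<q1} \<times> {0..<q2}"
proof (rule image_card_eq[OF _ psi_inj[OF assms]])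
  show "(\<lambda>a. (a * q2 mod q1, a * q1 mod q2)) ` {0..<q1 * q2} \<subseteq> {0..<q1} \<times> {0..<q2}"
    using assms by auto
  show "card {0..<q1 * q2} = card ({0..<q1} \<times> {0..<q2})"
    using assms by (simp add: card_cartesian_product nat_mult_distrib)
qed simp

lemma S_mult:
  fixes q1 q2 a n :: int
  assumes "q1 \<ge> 1" "q2 \<ge> 1" "coprime q1 q2"
  shows "S (q1 * q2) a n = S q1 (a * q2) n * S q2 (a * q1) n"
proof -
  define g where "g x = e (of_int (a * x^2 + n * x) / of_int (q1 * q2))" for x
  define \<phi> where "\<phi> = (\<lambda>(y1::int, y2::int). (q2 * y1 + q1 * y2) mod (q1 * q2))"
  have qq: "q1 * q2 \<ge> 1" using assms mult_mono[of 1 q1 1 q2] by simp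
  have "S (q1 * q2) a n = sum g {0..<q1 * q2}"
    unfolding g_def by (rule S_alt[OF qq])
  also have "\<dots> = sum g (\<phi> ` ({0..<q1} \<times> {0..<q2}))"
    unfolding \<phi>_def using phi_image[OF assms] by simp
  also have "\<dots> = sum (g \<circ> \<phi>) ({0..<q1} \<times> {0..<q2})"
    by (rule sum.reindex) (unfold \<phi>_def, rule phi_inj[OF assms])
  also have "\<dots> = (\<Sum>(y1, y2)\<in>{0..<q1} \<times> {0..<q2}.
      e (of_int (a * q2 * y1^2 + n * y1) / of_int q1) * e (of_int (a * q1 * y2^2 + n * y2) / of_int q2))"
  proof (rule sum.cong[OF refl], clarify)
    fix y1 y2
    let ?x = "q2 * y1 + q1 * y2"
    have "(g \<circ> \<phi>) (y1, y2) = g (?x mod (q1 * q2))" by (simp add: \<phi>_def)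
    also have "\<dots> = g ?x"
    proof -
      have "[a * (?x mod (q1 * q2))^2 + n * (?x mod (q1 * q2)) = a * ?x^2 + n * ?x] (mod q1 * q2)"
        by (intro cong_add cong_mult cong_pow cong_refl) (simp_all add: cong_def)
      thus ?thesis unfolding g_def using qq by (intro E_cong) auto
    qed
    also have "\<dots> = e (of_int (q2 * (a * q2 * y1^2 + n * y1) + q1 * (a * q1 * y2^2 + n * y2)) / of_int (q1 * q2))"
    proof -
      have "a * ?x^2 + n * ?x = q2 * (a * q2 * y1^2 + n * y1) + q1 * (a * q1 * y2^2 + n * y2) + (q1 * q2) * (2 * a * y1 * y2)"
        by (simp add: power2_eq_square algebra_simps)
      hence "[a * ?x^2 + n * ?x = q2 * (a * q2 * y1^2 + n * y1) + q1 * (a * q1 * y2^2 + n * y2)] (mod q1 * q2)"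
        by (simp add: cong_def)
      thus ?thesis unfolding g_def using qq by (intro E_cong) auto
    qed
    also have "\<dots> = e (of_int (q2 * (a * q2 * y1^2 + n * y1)) / of_int (q1 * q2)) *
                    e (of_int (q1 * (a * q1 * y2^2 + n * y2)) / of_int (q1 * q2))"
      by (rule E_add)
    also have "e (of_int (q2 * (a * q2 * y1^2 + n * y1)) / of_int (q1 * q2)) = e (of_int (a * q2 * y1^2 + n * y1) / of_int q1)"
      using E_scale[of q2 "a * q2 * y1^2 + n * y1" q1] assms by (simp add: mult.commute[of q1 q2])
    also have "e (of_int (q1 * (a * q1 * y2^2 + n * y2)) / of_int (q1 * q2)) = e (of_int (a * q1 * y2^2 + n * y2) / of_int q2)"
      using E_scale[of q1 "a * q1 * y2^2 + n * y2" q2] assms by simp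
    finally show "(g \<circ> \<phi>) (y1, y2) = e (of_int (a * q2 * y1^2 + n * y1) / of_int q1) * e (of_int (a * q1 * y2^2 + n * y2) / of_int q2)" .
  qed
  also have "\<dots> = (\<Sum>y1\<in>{0..<q1}. \<Sum>y2\<in>{0..<q2}.
      e (of_int (a * q2 * y1^2 + n * y1) / of_int q1) * e (of_int (a * q1 * y2^2 + n * y2) / of_int q2))"
    by (rule sum.cartesian_product[symmetric])
  also have "\<dots> = S q1 (a * q2) n * S q2 (a * q1) n"
    by (simp add: S_alt[OF assms(1)] S_alt[OF assms(2)] sum_product)
  finally show ?thesis .
qed

lemma ac8: "(A * B) * (C * D) * (E * F) * (X * (Y::complex)) = A * C * E * X * (B * D * F * Y)"
  by (simp add: ac_simps)

definition G :: "int \<Rightarrow> int \<Rightarrow> int \<Rightarrow> int \<Rightarrow> int \<Rightarrow> int \<Rightarrow> complex" where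
  "G q n1 n2 n3 m b = (if coprime b q then S q b n1 * S q b n2 * S q b n3 *
      e (of_int (modular_inverse q b * m) / of_int q) else 0)"

lemma G_mod:
  fixes q b :: int
  assumes "q \<ge> 1"
  shows "G q n1 n2 n3 m (b mod q) = G q n1 n2 n3 m b"
proof (cases "coprime b q")
  case False
  thus ?thesis unfolding G_def using assms by simp
next
  case True
  have cb: "coprime (b mod q) q" using True assms by simp
  have "[b * modular_inverse q (b mod q) = (b mod q) * modular_inverse q (b mod q)] (mod q)"
    by (intro cong_mult cong_refl) (simp add: cong_def)
  also have "[(b mod q) * modular_inverse q (b mod q) = 1] (mod q)"
    using cb by (rule cong_modular_inverse1)
  finally have "[modular_inverse q b = modular_inverse q (b mod q)] (mod q)"
    using assms by (intro inv_cong) auto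
  hence "[modular_inverse q (b mod q) * m = modular_inverse q b * m] (mod q)"
    by (intro cong_mult cong_refl) (rule cong_sym)
  hence "e (of_int (modular_inverse q (b mod q) * m) / of_int q) = e (of_int (modular_inverse q b * m) / of_int q)"
    using assms by (intro E_cong) auto
  thus ?thesis unfolding G_def using True cb S_mod[OF assms] by simp
qed

lemma T_G:
  fixes q :: int
  assumes "q \<ge> 1"
  shows "T q n1 n2 n3 m = sum (G q n1 n2 n3 m) {0..<q}"
proof -
  have "T q n1 n2 n3 m = sum (G q n1 n2 n3 m) {1..q}"
    unfolding T_def G_def by (rule sum.inter_filter) simp
  also have "\<dots> = sum (G q n1 n2 n3 m) {0..<q}"
    by (rule sum_shift[OF assms]) (rule G_mod[OF assms])
  finally show ?thesis .
qed

lemma G_mult: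
  fixes q1 q2 a :: int
  assumes "q1 \<ge> 1" "q2 \<ge> 1" "coprime q1 q2"
  shows "G (q1 * q2) n1 n2 n3 m a = G q1 n1 n2 n3 m (a * q2) * G q2 n1 n2 n3 m (a * q1)"
proof (cases "coprime a (q1 * q2)")
  case False
  hence "\<not> coprime (a * q2) q1 \<or> \<not> coprime (a * q1) q2"
    using assms(3) by (auto simp: coprime_commute)
  thus ?thesis unfolding G_def using False by auto
next
  case True
  have a1: "coprime a q1" and a2: "coprime a q2" using True by auto
  have b1: "coprime (a * q2) q1" and b2: "coprime (a * q1) q2"
    using a1 a2 assms(3) by (auto simp: coprime_commute)
  have qq: "q1 * q2 \<ge> 1" using assms mult_mono[of 1 q1 1 q2] by simp
  define i where "i = modular_inverse (q1 * q2) a"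
  define i1 where "i1 = modular_inverse q1 (a * q2)"
  define i2 where "i2 = modular_inverse q2 (a * q1)"
  have ci: "[a * i = 1] (mod q1 * q2)" unfolding i_def using True by (rule cong_modular_inverse1)
  have ci1: "[a * q2 * i1 = 1] (mod q1)" unfolding i1_def using b1 by (rule cong_modular_inverse1)
  have ci2: "[a * q1 * i2 = 1] (mod q2)" unfolding i2_def using b2 by (rule cong_modular_inverse1)
  have m1: "[i = q2 * i1 + q1 * i2] (mod q1)"
  proof -
    have "[a * i = 1] (mod q1)" using ci by (rule cong_modulus_mult)
    moreover have "[a * (q2 * i1) = 1] (mod q1)" using ci1 by (simp add: mult.assoc)
    ultimately have "[a * i = a * (q2 * i1)] (mod q1)" by (meson cong_sym cong_trans)
    hence "[i = q2 * i1] (mod q1)" using a1 by (simp add: cong_mult_lcancel)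
    moreover have "[q2 * i1 = q2 * i1 + q1 * i2] (mod q1)" by (simp add: cong_def)
    ultimately show ?thesis by (rule cong_trans)
  qed
  have m2: "[i = q2 * i1 + q1 * i2] (mod q2)"
  proof -
    have "[a * i = 1] (mod q2)" using ci by (metis cong_modulus_mult mult.commute)
    moreover have "[a * (q1 * i2) = 1] (mod q2)" using ci2 by (simp add: mult.assoc)
    ultimately have "[a * i = a * (q1 * i2)] (mod q2)" by (meson cong_sym cong_trans)
    hence "[i = q1 * i2] (mod q2)" using a2 by (simp add: cong_mult_lcancel)
    moreover have "[q1 * i2 = q2 * i1 + q1 * i2] (mod q2)" by (simp add: cong_def)
    ultimately show ?thesis by (rule cong_trans)
  qed
  have "[i = q2 * i1 + q1 * i2] (mod q1 * q2)" using m1 m2 assms(3) by (rule coprime_cong_mult)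
  hence "[i * m = (q2 * i1 + q1 * i2) * m] (mod q1 * q2)"
    by (rule cong_mult[OF _ cong_refl])
  hence "[i * m = q2 * (i1 * m) + q1 * (i2 * m)] (mod q1 * q2)"
    by (simp add: algebra_simps)
  hence "e (of_int (i * m) / of_int (q1 * q2)) = e (of_int (q2 * (i1 * m) + q1 * (i2 * m)) / of_int (q1 * q2))"
    using qq by (intro E_cong) auto
  also have "\<dots> = e (of_int (q2 * (i1 * m)) / of_int (q1 * q2)) * e (of_int (q1 * (i2 * m)) / of_int (q1 * q2))"
    by (rule E_add)
  also have "e (of_int (q2 * (i1 * m)) / of_int (q1 * q2)) = e (of_int (i1 * m) / of_int q1)"
    using E_scale[of q2 "i1 * m" q1] assms by (simp add: mult.commute[of q1 q2])
  also have "e (of_int (q1 * (i2 * m)) / of_int (q1 * q2)) = e (of_int (i2 * m) / of_int q2)"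
    using E_scale[of q1 "i2 * m" q2] assms by simp
  finally have E: "e (of_int (i * m) / of_int (q1 * q2)) = e (of_int (i1 * m) / of_int q1) * e (of_int (i2 * m) / of_int q2)" .
  have L: "G (q1 * q2) n1 n2 n3 m a = S (q1 * q2) a n1 * S (q1 * q2) a n2 * S (q1 * q2) a n3 * e (of_int (i * m) / of_int (q1 * q2))"
    unfolding G_def i_def using True by simp
  have R1: "G q1 n1 n2 n3 m (a * q2) = S q1 (a * q2) n1 * S q1 (a * q2) n2 * S q1 (a * q2) n3 * e (of_int (i1 * m) / of_int q1)"
    unfolding G_def i1_def using b1 by simp
  have R2: "G q2 n1 n2 n3 m (a * q1) = S q2 (a * q1) n1 * S q2 (a * q1) n2 * S q2 (a * q1) n3 * e (of_int (i2 * m) / of_int q2)"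
    unfolding G_def i2_def using b2 by simp
  show ?thesis unfolding L R1 R2 E S_mult[OF assms] by (rule ac8)
qed

theorem lemma3p5:
  fixes q1 q2 n1 n2 n3 m :: int
  assumes "q1 \<ge> 1" and "q2 \<ge> 1" and "coprime q1 q2"
  shows "T (q1 * q2) n1 n2 n3 m = T q1 n1 n2 n3 m * T q2 n1 n2 n3 m"
proof -
  have qq: "q1 * q2 \<ge> 1" using assms mult_mono[of 1 q1 1 q2] by simp
  define \<psi> where "\<psi> = (\<lambda>a::int. (a * q2 mod q1, a * q1 mod q2))"
  define h where "h = (\<lambda>p::int \<times> int. G q1 n1 n2 n3 m (fst p) * G q2 n1 n2 n3 m (snd p))"
  have "T (q1 * q2) n1 n2 n3 m = sum (G (q1 * q2) n1 n2 n3 m) {0..<q1 * q2}"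
    by (rule T_G[OF qq])
  also have "\<dots> = sum (h \<circ> \<psi>) {0..<q1 * q2}"
    by (rule sum.cong[OF refl]) (simp add: h_def \<psi>_def G_mult[OF assms] G_mod assms)
  also have "\<dots> = sum h (\<psi> ` {0..<q1 * q2})"
    by (rule sum.reindex[symmetric]) (unfold \<psi>_def, rule psi_inj[OF assms])
  also have "\<dots> = sum h ({0..<q1} \<times> {0..<q2})"
    unfolding \<psi>_def using psi_image[OF assms] by simp
  also have "\<dots> = (\<Sum>b1\<in>{0..<q1}. \<Sum>b2\<in>{0..<q2}. G q1 n1 n2 n3 m b1 * G q2 n1 n2 n3 m b2)"
    unfolding h_def by (subst sum.cartesian_product) (simp add: split_def)
  also have "\<dots> = T q1 n1 n2 n3 m * T q2 n1 n2 n3 m"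
    by (simp add: T_G[OF assms(1)] T_G[OF assms(2)] sum_product)
  finally show ?thesis .
qed

end
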